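(* Let $X$ be a Banach space and let $h$ be a metric functional of $X$ (with base point $0$). Then there is a continuous linear functional $f$ on $X$ of norm at most $1$ such that $f(x)\leq h(x)$ for all $x\in X$.
   Context: For $y\in X$ let $h_y(x)=\|x-y\|-\|y\|$. Endow $\mathbb{R}^X$ with the topology of pointwise convergence. A metric functional of $X$ is an element of the closure of $\{h_y: y\in X\}$ in $\mathbb{R}^X$. *)

theory Defs
  imports "HOL-Analysis.Analysis"
begin

definition hfun :: "'a::real_normed_vector \<Rightarrow> 'a \<Rightarrow> real" where
  "hfun y = (\<lambda>x. norm (x - y) - norm y)"

text \<open>Metric functionals: closure of the h_y in the pointwise-convergence
  (product) topology on 'a \<Rightarrow> real, which is the library's topology on functions.\<close>
definition metric_functional :: "('a::real_normed_vector \<Rightarrow> real) \<Rightarrow> bool" where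
  "metric_functional h \<longleftrightarrow> h \<in> closure (range hfun)"

end

theory Submission
  imports Defs
begin


definition goodG :: "('a::real_vector \<Rightarrow> real) \<Rightarrow> ('a \<times> real) set \<Rightarrow> bool" where
  "goodG h G \<longleftrightarrow> (\<forall>x a b. (x,a)\<in>G \<longrightarrow> (x,b)\<in>G \<longrightarrow> a=b) \<and>
     (\<forall>x a y b c. (x,a)\<in>G \<longrightarrow> (y,b)\<in>G \<longrightarrow> (c *\<^sub>R x + y, c*a+b)\<in>G) \<and>
     (\<forall>x a. (x,a)\<in>G \<longrightarrow> a \<le> h x)"

lemma extend_step:
  fixes h :: "'a::real_vector \<Rightarrow> real"
  assumes cvx: "\<And>u x1 x2. 0 \<le> u \<Longrightarrow> u \<le> 1 \<Longrightarrow> h (u *\<^sub>R x1 + (1-u) *\<^sub>R x2) \<le> u * h x1 + (1-u) * h x2"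
    and g: "goodG h G" and z: "z \<notin> fst ` G" and ne: "G \<noteq> {}"
  shows "\<exists>G'. goodG h G' \<and> G \<subseteq> G' \<and> G' \<noteq> G"
proof -
  have fn: "\<And>x a b. (x,a)\<in>G \<Longrightarrow> (x,b)\<in>G \<Longrightarrow> a=b"
    and cl: "\<And>x a y b c. (x,a)\<in>G \<Longrightarrow> (y,b)\<in>G \<Longrightarrow> (c *\<^sub>R x + y, c*a+b)\<in>G"
    and dom: "\<And>x a. (x,a)\<in>G \<Longrightarrow> a \<le> h x" using g unfolding goodG_def by blast+
  obtain x0 a0 where x0: "(x0,a0)\<in>G" using ne by auto
  have zero: "(0,0) \<in> G" using cl[OF x0 x0, of "-1"] by simp
  have sc: "(c *\<^sub>R x, c*a) \<in> G" if "(x,a)\<in>G" for x a c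
    using cl[OF that zero, of c] by simp
  define S where "S = {(a - h (m - s *\<^sub>R z)) / s | m a s. (m,a)\<in>G \<and> s > 0}"
  define T where "T = {(h (m + t *\<^sub>R z) - a) / t | m a t. (m,a)\<in>G \<and> t > 0}"
  have key: "(a' - h (m' - s *\<^sub>R z)) / s \<le> (h (m + t *\<^sub>R z) - a) / t"
    if "(m',a')\<in>G" "(m,a)\<in>G" "s>0" "t>0" for m' a' m a s t
  proof -
    define u where "u = t / (s+t)"
    have u0: "0 \<le> u" "u \<le> 1" using that unfolding u_def by auto
    have w: "u *\<^sub>R (m' - s *\<^sub>R z) + (1-u) *\<^sub>R (m + t *\<^sub>R z) = u *\<^sub>R m' + (1-u) *\<^sub>R m"
    proof -
      have "1 - u = s/(s+t)" unfolding u_def using that by (simp add: field_simps)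
      hence us: "u * s = (1-u) * t" unfolding u_def using that by (simp add: field_simps)
      have "u *\<^sub>R (m' - s *\<^sub>R z) + (1-u) *\<^sub>R (m + t *\<^sub>R z)
          = u *\<^sub>R m' + (1-u) *\<^sub>R m + ((1-u) * t - u * s) *\<^sub>R z"
        by (simp add: algebra_simps)
      thus ?thesis using us by simp
    qed
    have "(u *\<^sub>R m' + (1-u) *\<^sub>R m, u*a' + (1-u)*a) \<in> G"
      using cl[OF that(1) sc[OF that(2), of "1-u"], of u] by simp
    hence "u*a' + (1-u)*a \<le> h (u *\<^sub>R m' + (1-u) *\<^sub>R m)" by (rule dom)
    also have "\<dots> \<le> u * h (m' - s *\<^sub>R z) + (1-u) * h (m + t *\<^sub>R z)"
      using cvx[OF u0] w by metis
    finally have ineq: "u*a' + (1-u)*a \<le> u * h (m' - s *\<^sub>R z) + (1-u) * h (m + t *\<^sub>R z)" .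
    have "1 - u = s/(s+t)" unfolding u_def using that by (simp add: field_simps)
    with ineq have "(t/(s+t))*a' + (s/(s+t))*a \<le> (t/(s+t)) * h (m' - s *\<^sub>R z) + (s/(s+t)) * h (m + t *\<^sub>R z)"
      unfolding u_def by simp
    hence "(s+t) * ((t/(s+t))*a' + (s/(s+t))*a) \<le> (s+t) * ((t/(s+t)) * h (m' - s *\<^sub>R z) + (s/(s+t)) * h (m + t *\<^sub>R z))"
      using that by (intro mult_left_mono) auto
    hence "t*a' + s*a \<le> t * h (m' - s *\<^sub>R z) + s * h (m + t *\<^sub>R z)"
      using that by (simp add: distrib_left)
    thus ?thesis using that by (simp add: field_simps)
  qed
  have Sne: "S \<noteq> {}"
  proof -
    have "(0 - h (0 - 1 *\<^sub>R z)) / 1 \<in> S" unfolding S_def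
      by (rule CollectI, rule exI[of _ 0], rule exI[of _ 0], rule exI[of _ 1]) (simp add: zero)
    thus ?thesis by blast
  qed
  have Tne: "T \<noteq> {}"
  proof -
    have "(h (0 + 1 *\<^sub>R z) - 0) / 1 \<in> T" unfolding T_def
      by (rule CollectI, rule exI[of _ 0], rule exI[of _ 0], rule exI[of _ 1]) (simp add: zero)
    thus ?thesis by blast
  qed
  have ST: "p \<le> q" if pq: "p \<in> S" "q \<in> T" for p q
  proof -
    obtain m' a' s where "p = (a' - h (m' - s *\<^sub>R z)) / s" "(m',a')\<in>G" "s > 0"
      using pq(1) unfolding S_def by auto
    moreover obtain m a t where "q = (h (m + t *\<^sub>R z) - a) / t" "(m,a)\<in>G" "t > 0"
      using pq(2) unfolding T_def by auto
    ultimately show ?thesis using key by simp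
  qed
  define c where "c = Sup S"
  obtain q0 where "q0 \<in> T" using Tne by auto
  hence bdd: "bdd_above S" using ST unfolding bdd_above_def by auto
  have cS: "\<And>p. p \<in> S \<Longrightarrow> p \<le> c" unfolding c_def using bdd by (simp add: cSup_upper)
  have cT: "\<And>q. q \<in> T \<Longrightarrow> c \<le> q" unfolding c_def using Sne ST by (simp add: cSup_least)
  define G' where "G' = {(m + t *\<^sub>R z, a + t*c) | m a t. (m,a)\<in>G}"
  have "goodG h G'"
    unfolding goodG_def
  proof (intro conjI allI impI)
    fix x a b assume "(x,a)\<in>G'" "(x,b)\<in>G'"
    then obtain m1 a1 t1 m2 a2 t2 where 1: "(m1,a1)\<in>G" "x = m1 + t1 *\<^sub>R z" "a = a1 + t1*c"
      and 2: "(m2,a2)\<in>G" "x = m2 + t2 *\<^sub>R z" "b = a2 + t2*c" unfolding G'_def by blast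
    have "t1 = t2"
    proof (rule ccontr)
      assume ne: "t1 \<noteq> t2"
      have "(t1-t2) *\<^sub>R z = m2 - m1" using 1 2 by (simp add: algebra_simps)
      hence "(1/(t1-t2)) *\<^sub>R ((t1-t2) *\<^sub>R z) = (1/(t1-t2)) *\<^sub>R (m2 - m1)" by simp
      hence "z = (1/(t1-t2)) *\<^sub>R (m2 - m1)" using ne by simp
      hence "z = (1/(t1-t2)) *\<^sub>R m2 + (-1/(t1-t2)) *\<^sub>R m1"
        by (simp add: scaleR_diff_right)
      moreover have "((1/(t1-t2)) *\<^sub>R m2 + (-1/(t1-t2)) *\<^sub>R m1, (1/(t1-t2)) * a2 + (-1/(t1-t2))*a1) \<in> G"
        using cl[OF 2(1) sc[OF 1(1)]] by blast
      ultimately have "z \<in> fst ` G" by (metis fst_conv image_eqI)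
      with z show False by simp
    qed
    hence "m1 = m2" using 1 2 by simp
    hence "a1 = a2" using fn 1 2 by blast
    thus "a = b" using 1 2 \<open>t1=t2\<close> by simp
  next
    fix x a y b d assume "(x,a)\<in>G'" "(y,b)\<in>G'"
    then obtain m1 a1 t1 m2 a2 t2 where 1: "(m1,a1)\<in>G" "x = m1 + t1 *\<^sub>R z" "a = a1 + t1*c"
      and 2: "(m2,a2)\<in>G" "y = m2 + t2 *\<^sub>R z" "b = a2 + t2*c" unfolding G'_def by blast
    have "(d *\<^sub>R m1 + m2, d*a1 + a2) \<in> G" using cl 1 2 by blast
    moreover have "d *\<^sub>R x + y = (d *\<^sub>R m1 + m2) + (d*t1+t2) *\<^sub>R z"
      using 1 2 by (simp add: algebra_simps)
    moreover have "d*a+b = (d*a1 + a2) + (d*t1+t2)*c" using 1 2 by (simp add: algebra_simps)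
    ultimately show "(d *\<^sub>R x + y, d*a+b) \<in> G'" unfolding G'_def by blast
  next
    fix x a assume "(x,a)\<in>G'"
    then obtain m a1 t where 1: "(m,a1)\<in>G" "x = m + t *\<^sub>R z" "a = a1 + t*c"
      unfolding G'_def by blast
    consider "t > 0" | "t = 0" | "t < 0" by linarith
    thus "a \<le> h x"
    proof cases
      case 1
      hence "(h (m + t *\<^sub>R z) - a1) / t \<in> T" unfolding T_def using \<open>(m,a1)\<in>G\<close> by blast
      hence "c \<le> (h (m + t *\<^sub>R z) - a1) / t" by (rule cT)
      thus ?thesis using 1 \<open>x = _\<close> \<open>a = _\<close> by (simp add: field_simps)
    next
      case 2 thus ?thesis using dom 1 by simp
    next
      case 3
      have "(a1 - h (m - (-t) *\<^sub>R z)) / (-t) \<in> S" unfolding S_def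
        by (rule CollectI, rule exI[of _ m], rule exI[of _ a1], rule exI[of _ "-t"]) (simp add: 3 \<open>(m,a1)\<in>G\<close>)
      hence "(a1 - h (m - (-t) *\<^sub>R z)) / (-t) \<le> c" by (rule cS)
      thus ?thesis using 3 \<open>x = _\<close> \<open>a = _\<close> by (simp add: field_simps)
    qed
  qed
  moreover have "G \<subseteq> G'"
  proof
    fix p assume "p \<in> G"
    then obtain m a where "p = (m,a)" "(m,a)\<in>G" by (cases p) auto
    thus "p \<in> G'" unfolding G'_def
      by (intro CollectI exI[of _ m] exI[of _ a] exI[of _ 0]) simp
  qed
  moreover have "(z, c) \<in> G'" unfolding G'_def
    by (intro CollectI exI[of _ 0] exI[of _ "0::real"] exI[of _ "1::real"]) (simp add: zero)
  hence "G' \<noteq> G" using z by (metis fst_conv image_eqI)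
  ultimately show ?thesis by blast
qed


lemma closed_pred:
  assumes "continuous_on UNIV (F :: ('a::real_normed_vector \<Rightarrow> real) \<Rightarrow> real)"
    and "\<And>y. F (hfun y) \<le> 0" and "metric_functional h"
  shows "F h \<le> 0"
proof -
  have "closed {g. F g \<le> 0}"
    using closed_Collect_le[OF assms(1) continuous_on_const] by simp
  moreover have "range hfun \<subseteq> {g. F g \<le> 0}" using assms(2) by auto
  ultimately have "closure (range hfun) \<subseteq> {g. F g \<le> 0}" by (rule closure_minimal[rotated])
  thus ?thesis using assms(3) unfolding metric_functional_def by auto
qed

lemma mf_le_norm:
  fixes h :: "'a::real_normed_vector \<Rightarrow> real"
  assumes "metric_functional h" shows "h x \<le> norm x"
proof -
  have "(\<lambda>g::'a\<Rightarrow>real. g x - norm x) h \<le> 0"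
  proof (rule closed_pred[OF _ _ assms])
    show "continuous_on UNIV (\<lambda>g::'a\<Rightarrow>real. g x - norm x)"
      by (intro continuous_intros) simp
    fix y :: 'a
    show "hfun y x - norm x \<le> 0" unfolding hfun_def
      using norm_triangle_ineq4[of x y] by simp
  qed
  thus ?thesis by simp
qed

lemma mf_zero:
  fixes h :: "'a::real_normed_vector \<Rightarrow> real"
  assumes "metric_functional h" shows "0 \<le> h 0"
proof -
  have "(\<lambda>g::'a\<Rightarrow>real. - g 0) h \<le> 0"
  proof (rule closed_pred[OF _ _ assms])
    show "continuous_on UNIV (\<lambda>g::'a\<Rightarrow>real. - g 0)"
      by (intro continuous_intros) simp
    fix y :: 'a
    show "- hfun y 0 \<le> 0" unfolding hfun_def by simp
  qed
  thus ?thesis by simp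
qed

lemma mf_convex:
  fixes h :: "'a::real_normed_vector \<Rightarrow> real"
  assumes "metric_functional h" "0 \<le> u" "u \<le> 1"
  shows "h (u *\<^sub>R x1 + (1-u) *\<^sub>R x2) \<le> u * h x1 + (1-u) * h x2"
proof -
  have "(\<lambda>g::'a\<Rightarrow>real. g (u *\<^sub>R x1 + (1-u) *\<^sub>R x2) - (u * g x1 + (1-u) * g x2)) h \<le> 0"
  proof (rule closed_pred[OF _ _ assms(1)])
    show "continuous_on UNIV (\<lambda>g::'a\<Rightarrow>real. g (u *\<^sub>R x1 + (1-u) *\<^sub>R x2) - (u * g x1 + (1-u) * g x2))"
      by (intro continuous_intros) simp_all
    fix y :: 'a
    have "u *\<^sub>R x1 + (1-u) *\<^sub>R x2 - y = u *\<^sub>R (x1 - y) + (1-u) *\<^sub>R (x2 - y)"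
      by (simp add: algebra_simps)
    hence "norm (u *\<^sub>R x1 + (1-u) *\<^sub>R x2 - y) \<le> norm (u *\<^sub>R (x1 - y)) + norm ((1-u) *\<^sub>R (x2 - y))"
      by (metis norm_triangle_ineq)
    also have "\<dots> = u * norm (x1 - y) + (1-u) * norm (x2 - y)" using assms by simp
    finally show "hfun y (u *\<^sub>R x1 + (1-u) *\<^sub>R x2) - (u * hfun y x1 + (1-u) * hfun y x2) \<le> 0"
      unfolding hfun_def by (simp add: algebra_simps)
  qed
  thus ?thesis by simp
qed


lemma goodG_fn: "goodG h G \<Longrightarrow> (x,a)\<in>G \<Longrightarrow> (x,b)\<in>G \<Longrightarrow> a=b"
  unfolding goodG_def by blast
lemma goodG_cl: "goodG h G \<Longrightarrow> (x,a)\<in>G \<Longrightarrow> (y,b)\<in>G \<Longrightarrow> (c *\<^sub>R x + y, c*a+b)\<in>G"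
  unfolding goodG_def by blast
lemma goodG_dom: "goodG h G \<Longrightarrow> (x,a)\<in>G \<Longrightarrow> a \<le> h x"
  unfolding goodG_def by blast

lemma HB_convex:
  fixes h :: "'a::real_vector \<Rightarrow> real"
  assumes cvx: "\<And>u x1 x2. 0 \<le> u \<Longrightarrow> u \<le> 1 \<Longrightarrow> h (u *\<^sub>R x1 + (1-u) *\<^sub>R x2) \<le> u * h x1 + (1-u) * h x2"
    and h0: "0 \<le> h 0"
  shows "\<exists>f. (\<forall>x y. f (x+y) = f x + f y) \<and> (\<forall>c x. f (c *\<^sub>R x) = c * f x) \<and> (\<forall>x. f x \<le> h x)"
proof -
  have "\<forall>C\<in>chains {G. goodG h G}. \<Union>C \<in> {G. goodG h G}"
  proof
    fix C assume C: "C \<in> chains {G. goodG h G}"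
    have sub: "goodG h G" if "G \<in> C" for G using C that unfolding chains_def by auto
    have ch: "G1 \<subseteq> G2 \<or> G2 \<subseteq> G1" if "G1 \<in> C" "G2 \<in> C" for G1 G2
      using C that unfolding chains_def chain_subset_def by auto
    have two: "\<exists>G\<in>C. p \<in> G \<and> q \<in> G" if pq: "p \<in> \<Union>C" "q \<in> \<Union>C" for p q
    proof -
      obtain G1 where "G1\<in>C" "p\<in>G1" using pq(1) by auto
      moreover obtain G2 where "G2\<in>C" "q\<in>G2" using pq(2) by auto
      ultimately show ?thesis using ch[of G1 G2] by auto
    qed
    show "\<Union>C \<in> {G. goodG h G}" unfolding mem_Collect_eq goodG_def
    proof (intro conjI allI impI)
      fix x a b assume "(x,a)\<in>\<Union>C" "(x,b)\<in>\<Union>C"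
      then obtain G where "G\<in>C" "(x,a)\<in>G" "(x,b)\<in>G" using two by meson
      thus "a = b" using sub goodG_fn by metis
    next
      fix x a y b c assume "(x,a)\<in>\<Union>C" "(y,b)\<in>\<Union>C"
      then obtain G where "G\<in>C" "(x,a)\<in>G" "(y,b)\<in>G" using two by meson
      hence "(c *\<^sub>R x + y, c*a+b)\<in>G" using sub goodG_cl by metis
      thus "(c *\<^sub>R x + y, c*a+b)\<in>\<Union>C" using \<open>G\<in>C\<close> by auto
    next
      fix x a assume "(x,a)\<in>\<Union>C"
      then obtain G where "G\<in>C" "(x,a)\<in>G" by auto
      thus "a \<le> h x" using sub goodG_dom by metis
    qed
  qed
  from Zorn_Lemma[OF this] obtain M where M: "goodG h M"
    and max: "\<And>X. goodG h X \<Longrightarrow> M \<subseteq> X \<Longrightarrow> X = M" by auto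
  have Mne: "M \<noteq> {}"
  proof
    assume e: "M = {}"
    have "goodG h {(0,0)}" unfolding goodG_def using h0 by simp
    with max[of "{(0,0)}"] e show False by simp
  qed
  have all: "\<exists>a. (x,a) \<in> M" for x
  proof (rule ccontr)
    assume "\<not> ?thesis"
    hence "x \<notin> fst ` M" by force
    from extend_step[OF cvx M this Mne] obtain G' where "goodG h G'" "M \<subseteq> G'" "G' \<noteq> M" by auto
    with max show False by metis
  qed
  note fn = goodG_fn[OF M] and cl = goodG_cl[OF M] and dom = goodG_dom[OF M]
  define f where "f x = (THE a. (x,a) \<in> M)" for x
  have fM: "(x, f x) \<in> M" for x
  proof -
    obtain a where a: "(x,a)\<in>M" using all by auto
    have "(THE a. (x,a) \<in> M) = a" by (rule the_equality) (use a fn in auto)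
    thus ?thesis using a unfolding f_def by simp
  qed
  have fv: "(x,a)\<in>M \<Longrightarrow> f x = a" for x a using fM fn by metis
  have add: "f (x+y) = f x + f y" for x y
    using fv[OF cl[OF fM[of x] fM[of y], of 1]] by simp
  have zero: "(0,0) \<in> M" using cl[OF fM[of 0] fM[of 0], of "-1"] by simp
  have scl: "f (c *\<^sub>R x) = c * f x" for c x
    using fv[OF cl[OF fM[of x] zero, of c]] by simp
  have le: "f x \<le> h x" for x using dom[OF fM] .
  show ?thesis
    by (rule exI[of _ f]) (use add scl le in auto)
qed

theorem lemma3p1:
  fixes h :: "'a::banach \<Rightarrow> real"
  assumes "metric_functional h"
  shows "\<exists>f. bounded_linear f \<and> onorm f \<le> 1 \<and> (\<forall>x. f x \<le> h x)"
proof -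
  obtain f where add: "\<And>x y. f (x+y) = f x + f y" and scl: "\<And>c x. f (c *\<^sub>R x) = c * f x"
    and le: "\<And>x. f x \<le> h x"
    using HB_convex[of h, OF mf_convex[OF assms] mf_zero[OF assms]] by auto
  have nb: "norm (f x) \<le> norm x" for x
  proof -
    have "f x \<le> norm x" using le[of x] mf_le_norm[OF assms, of x] by simp
    moreover have "- f x \<le> norm x" using le[of "-x"] mf_le_norm[OF assms, of "-x"] scl[of "-1" x] by simp
    ultimately show ?thesis by simp
  qed
  have bl: "bounded_linear f"
    by (rule bounded_linear_intro[of f 1]) (use add scl nb in auto)
  have "onorm f \<le> 1" by (rule onorm_bound) (simp, metis nb mult_1)
  thus ?thesis using bl le by auto
qed

end
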